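(* Let $X\in\mathbb{R}^{n\times r}$ with $X^{\mathsf{T}}X=I_r$ represent a point of $\operatorname{Gr}(n,r)$ and let $X_\perp\in\mathbb{R}^{n\times(n-r)}$ be such that $[X\;X_\perp]$ is orthogonal. Let $\Delta\in\mathbf{T}_X$, let $X(t)$ be the geodesic and $T_{X,\Delta}(t)$ the transport matrix determined by $\Delta$, and let $X_\perp(t)=T_{X,\Delta}(t)X_\perp$. Identify $\mathbf{T}_X$ with $\mathbb{R}^{(n-r)r}$ via $\Delta_1=X_\perp D_1\mapsto \operatorname{vec}(D_1)$, and consider a linear operator in local coordinates $\hat A:\mathbb{R}^{(n-r)r}\to\mathbb{R}^{(n-r)r}$ together with the corresponding linear operator in global coordinates $A:\mathbb{R}^{nr}\to\mathbb{R}^{nr}$ (in which tangents in $\mathbf{T}_X$ are embedded via $\Delta_1\mapsto\operatorname{vec}(\Delta_1)$). Then \[ A=(I\otimes X_\perp)\hat A(I\otimes X_\perp^{\mathsf{T}}),\qquad \hat A=(I\otimes X_\perp^{\mathsf{T}})A(I\otimes X_\perp). \] Furthermore, the parallel transported operator has the same local representation for all $t$ along the geodesic: if $A(t)=(I\otimes T_{X,\Delta}(t))\,A\,(I\otimes \widetilde T(t))$, where $\widetilde T(t)=T_{X(t),-\Delta(t)}(t)$ with $\Delta(t)=T_{X,\Delta}(t)\Delta$ is the transport matrix from $X(t)$ back to $X$ along the same geodesic, and $\hat A(t)=(I\otimes X_\perp(t)^{\mathsf{T}})A(t)(I\otimes X_\perp(t))$, then $\hat A(t)=\hat A$ for all 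$t$.
   Context: Points of $\operatorname{Gr}(n,r)$ are represented by $n\times r$ matrices with orthonormal columns; $\mathbf{T}_X=\{\Delta\in\mathbb{R}^{n\times r}:X^{\mathsf{T}}\Delta=0\}$, and every tangent can be written $\Delta=X_\perp D$ with $D=X_\perp^{\mathsf{T}}\Delta\in\mathbb{R}^{(n-r)\times r}$ (local coordinates). For $\Delta=U\Sigma V^{\mathsf{T}}$ a thin SVD, the geodesic is $X(t)=[XV\;U]\begin{bmatrix}\cos\Sigma t\\ \sin\Sigma t\end{bmatrix}V^{\mathsf{T}}$ and the transport matrix is $T_{X,\Delta}(t)=[XV\;U]\begin{bmatrix}-\sin\Sigma t\\ \cos\Sigma t\end{bmatrix}U^{\mathsf{T}}+(I-UU^{\mathsf{T}})$; a tangent $\Delta_2\in\mathbf{T}_X$ is parallel transported to $T_{X,\Delta}(t)\Delta_2\in\mathbf{T}_{X(t)}$. $\operatorname{vec}$ is column-wise vectorization, $I=I_r$, and $\otimes$ is the Kronecker product, so $\operatorname{vec}(X_\perp D)=(I_r\otimes X_\perp)\operatorname{vec}(D)$. The global-coordinate operator $A$ corresponding to $\hat A$ is the operator that maps $\operatorname{vec}(X_\perp D_1)$ to $\operatorname{vec}(X_\perp D_2)$ whenever $\operatorname{vec}(D_2)=\hat A\operatorname{vec}(D_1)$, acting on vectorized tangents through the projection $I\otimes X_\perp X_\perp^{\mathsf{T}}$ onto the tangent space. *)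

theory Defs
  imports Complex_Main "Jordan_Normal_Form.Matrix"
begin

definition hcat :: "real mat \<Rightarrow> real mat \<Rightarrow> real mat" where
  "hcat X Y = mat (dim_row X) (dim_col X + dim_col Y)
     (\<lambda>(i,j). if j < dim_col X then X $$ (i,j) else Y $$ (i, j - dim_col X))"

definition orth_square :: "real mat \<Rightarrow> bool" where
  "orth_square Q \<longleftrightarrow> dim_row Q = dim_col Q \<and> transpose_mat Q * Q = 1\<^sub>m (dim_col Q)"

definition vecm :: "real mat \<Rightarrow> real vec" where
  "vecm M = vec (dim_row M * dim_col M) (\<lambda>k. M $$ (k mod dim_row M, k div dim_row M))"

definition kron :: "real mat \<Rightarrow> real mat \<Rightarrow> real mat" where
  "kron A B = mat (dim_row A * dim_row B) (dim_col A * dim_col B)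
     (\<lambda>(i,j). A $$ (i div dim_row B, j div dim_col B) * B $$ (i mod dim_row B, j mod dim_col B))"

definition diag_fun :: "(real \<Rightarrow> real) \<Rightarrow> real mat \<Rightarrow> real mat" where
  "diag_fun f S = mat (dim_row S) (dim_col S) (\<lambda>(i,j). if i = j then f (S $$ (i,i)) else 0)"

definition thin_svd :: "real mat \<Rightarrow> real mat \<Rightarrow> real mat \<Rightarrow> real mat \<Rightarrow> bool" where
  "thin_svd D U S V \<longleftrightarrow>
     U \<in> carrier_mat (dim_row D) (dim_col D) \<and>
     S \<in> carrier_mat (dim_col D) (dim_col D) \<and>
     V \<in> carrier_mat (dim_col D) (dim_col D) \<and>
     transpose_mat U * U = 1\<^sub>m (dim_col D) \<and>
     (\<forall>i < dim_col D. \<forall>j < dim_col D. i \<noteq> j \<longrightarrow> S $$ (i,j) = 0) \<and>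
     (\<forall>i < dim_col D. S $$ (i,i) \<ge> 0) \<and>
     transpose_mat V * V = 1\<^sub>m (dim_col D) \<and>
     D = U * S * transpose_mat V"

(* Geodesic X(t) = [XV U] [cos St; sin St] V^T  (block product written out). *)
definition geod :: "real mat \<Rightarrow> real mat \<Rightarrow> real mat \<Rightarrow> real mat \<Rightarrow> real \<Rightarrow> real mat" where
  "geod X U S V t =
     (X * V * diag_fun (\<lambda>s. cos (s * t)) S + U * diag_fun (\<lambda>s. sin (s * t)) S) * transpose_mat V"

(* Transport matrix T(t) = [XV U] [-sin St; cos St] U^T + (I - U U^T). *)
definition transp :: "real mat \<Rightarrow> real mat \<Rightarrow> real mat \<Rightarrow> real mat \<Rightarrow> real \<Rightarrow> real mat" where
  "transp X U S V t =
     (- (X * V * diag_fun (\<lambda>s. sin (s * t)) S) + U * diag_fun (\<lambda>s. cos (s * t)) S) * transpose_mat U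
     + (1\<^sub>m (dim_row X) - U * transpose_mat U)"

end

theory Submission
  imports Defs "Jordan_Normal_Form.Determinant"
begin

lemma massoc: "dim_col A = dim_row B \<Longrightarrow> dim_col B = dim_row C \<Longrightarrow> (A::real mat) * B * C = A * (B * C)"
  by (rule assoc_mult_mat[of A "dim_row A" "dim_col A" B "dim_col B" C "dim_col C"]) auto

lemma mdistl: "dim_col A = dim_row B \<Longrightarrow> dim_row C = dim_row B \<Longrightarrow> dim_col C = dim_col B \<Longrightarrow>
  (A::real mat) * (B + C) = A * B + A * C"
  by (rule mult_add_distrib_mat[of A "dim_row A" "dim_col A" B "dim_col B"]) auto

lemma mdistr: "dim_row A = dim_row B \<Longrightarrow> dim_col A = dim_col B \<Longrightarrow> dim_col B = dim_row C \<Longrightarrow>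
  ((A::real mat) + B) * C = A * C + B * C"
  by (rule add_mult_distrib_mat[of A "dim_row A" "dim_col A" B C "dim_col C"]) auto

lemma mminus: "dim_row A = dim_row B \<Longrightarrow> dim_col A = dim_col B \<Longrightarrow> (A::real mat) - B = A + - B"
  by (intro eq_matI) auto

lemma muminl: "dim_col A = dim_row B \<Longrightarrow> (- (A::real mat)) * B = - (A * B)"
  by (rule uminus_mult_left_mat)
lemma muminr: "dim_col A = dim_row B \<Longrightarrow> (A::real mat) * (- B) = - (A * B)"
  by (rule uminus_mult_right_mat)
lemma muminus_add: "dim_row A = dim_row B \<Longrightarrow> dim_col A = dim_col B \<Longrightarrow> - ((A::real mat) + B) = - A + - B"
  by (intro eq_matI) auto
lemma muminus_uminus: "- (- (A::real mat)) = A"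
  by (intro eq_matI) auto

lemma mtrans_mult: "dim_col A = dim_row B \<Longrightarrow> transpose_mat ((A::real mat) * B) = transpose_mat B * transpose_mat A"
  by (rule transpose_mult[of A "dim_row A" "dim_col A" B "dim_col B"]) auto
lemma mtrans_add: "dim_row A = dim_row B \<Longrightarrow> dim_col A = dim_col B \<Longrightarrow> transpose_mat ((A::real mat) + B) = transpose_mat A + transpose_mat B"
  by (intro eq_matI) auto
lemma mtrans_uminus: "transpose_mat (- (A::real mat)) = - transpose_mat A"
  by (intro eq_matI) auto

lemma mzerol: "b = dim_row A \<Longrightarrow> 0\<^sub>m a b * (A::real mat) = 0\<^sub>m a (dim_col A)"
  by (intro eq_matI) (auto simp: scalar_prod_def)
lemma mzeror: "b = dim_col A \<Longrightarrow> (A::real mat) * 0\<^sub>m b c = 0\<^sub>m (dim_row A) c"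
  by (intro eq_matI) (auto simp: scalar_prod_def)
lemma mzero_addl: "a = dim_row A \<Longrightarrow> b = dim_col A \<Longrightarrow> 0\<^sub>m a b + (A::real mat) = A"
  by (intro eq_matI) auto
lemma mzero_addr: "a = dim_row A \<Longrightarrow> b = dim_col A \<Longrightarrow> (A::real mat) + 0\<^sub>m a b = A"
  by (intro eq_matI) auto
lemma mzero_uminus: "- 0\<^sub>m a b = (0\<^sub>m a b :: real mat)"
  by (intro eq_matI) auto

lemma mone_r: "dim_col A = n \<Longrightarrow> (A::real mat) * 1\<^sub>m n = A" by simp
lemma mone_l: "dim_row A = n \<Longrightarrow> 1\<^sub>m n * (A::real mat) = A" by simp

lemmas mnorm = massoc mdistl mdistr muminl muminr muminus_add muminus_uminus mtrans_mult mtrans_add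
  mtrans_uminus mzerol mzeror mzero_addl mzero_addr mzero_uminus

lemma diag_dims[simp]: "dim_row (diag_fun f S) = dim_row S" "dim_col (diag_fun f S) = dim_col S"
  by (auto simp: diag_fun_def)
lemma diag_index[simp]: "i < dim_row S \<Longrightarrow> j < dim_col S \<Longrightarrow> diag_fun f S $$ (i,j) = (if i = j then f (S $$ (i,i)) else 0)"
  by (auto simp: diag_fun_def)

lemma diag_mult_index: assumes "dim_row S = dim_col S" "dim_row R = dim_col S" "i < dim_row S" "j < dim_col R"
  shows "(diag_fun f S * R) $$ (i,j) = f (S $$ (i,i)) * R $$ (i,j)"
proof -
  have "(diag_fun f S * R) $$ (i,j) = (\<Sum>k=0..<dim_col S. (if i = k then f (S $$ (i,i)) else 0) * R $$ (k,j))"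
    using assms by (simp add: scalar_prod_def)
  also have "\<dots> = (\<Sum>k=0..<dim_col S. if k = i then f (S $$ (i,i)) * R $$ (i,j) else 0)"
    by (rule sum.cong) auto
  also have "\<dots> = f (S $$ (i,i)) * R $$ (i,j)" using assms
    by (subst sum.delta) auto
  finally show ?thesis .
qed

lemma mult_diag_index: assumes "dim_row S = dim_col S" "dim_col R = dim_row S" "i < dim_row R" "j < dim_col S"
  shows "(R * diag_fun f S) $$ (i,j) = R $$ (i,j) * f (S $$ (j,j))"
proof -
  have "(R * diag_fun f S) $$ (i,j) = (\<Sum>k=0..<dim_col S. R $$ (i, k) * (if k = j then f (S $$ (k, k)) else 0))"
    using assms by (simp add: scalar_prod_def)
  also have "\<dots> = (\<Sum>k=0..<dim_col S. if k = j then R $$ (i,j) * f (S $$ (j,j)) else 0)"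
    by (rule sum.cong) auto
  also have "\<dots> = R $$ (i,j) * f (S $$ (j,j))" using assms
    by (subst sum.delta) auto
  finally show ?thesis .
qed

lemma diag_diag: "dim_row S = dim_col S \<Longrightarrow> diag_fun f S * diag_fun g S = diag_fun (\<lambda>s. f s * g s) S"
  apply (intro eq_matI)
  apply (subst diag_mult_index)
  by auto

lemma diag_diag_assoc: "dim_row S = dim_col S \<Longrightarrow> dim_row R = dim_col S \<Longrightarrow>
   diag_fun f S * (diag_fun g S * R) = diag_fun (\<lambda>s. f s * g s) S * R"
  by (subst massoc[symmetric]) (auto simp: diag_diag)

lemma diag_trans: "dim_row S = dim_col S \<Longrightarrow> transpose_mat (diag_fun f S) = diag_fun f S"
  by (intro eq_matI) auto

lemma sum_shift_aux: "(\<Sum>k\<in>{m..<m+c}. g k) = (\<Sum>p<c. g (m+p))" for g :: "nat \<Rightarrow> real"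
  by (induction c) auto

lemma sum_split_prod: "(\<Sum>k<r*c. g k) = (\<Sum>q<r. \<Sum>p<c. g (q*c+p)) " for g :: "nat \<Rightarrow> real"
proof (induction r)
  case 0 then show ?case by simp
next
  case (Suc r)
  have "(\<Sum>k<Suc r*c. g k) = (\<Sum>k<r*c. g k) + (\<Sum>k\<in>{r*c..<r*c+c}. g k)"
    by (simp add: add.commute lessThan_atLeast0 sum.atLeastLessThan_concat)
  also have "(\<Sum>k\<in>{r*c..<r*c+c}. g k) = (\<Sum>p<c. g (r*c+p))"
    by (rule sum_shift_aux)
  finally show ?case using Suc by simp
qed

lemma eq_mat_vecI: assumes "A \<in> carrier_mat N M" "B \<in> carrier_mat N M"
  "\<And>w. w \<in> carrier_vec M \<Longrightarrow> A *\<^sub>v w = (B::real mat) *\<^sub>v w" shows "A = B"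
proof (rule eq_matI)
  fix i j assume ij: "i < dim_row B" "j < dim_col B"
  have "A *\<^sub>v unit_vec M j = B *\<^sub>v unit_vec M j" by (rule assms(3)) simp
  hence "(A *\<^sub>v unit_vec M j) $ i = (B *\<^sub>v unit_vec M j) $ i" by simp
  thus "A $$ (i,j) = B $$ (i,j)" using assms(1,2) ij by auto
qed (use assms in auto)

lemma kron_dims[simp]: "dim_row (kron A B) = dim_row A * dim_row B" "dim_col (kron A B) = dim_col A * dim_col B"
  by (auto simp: kron_def)

lemma kron_index: "i < dim_row A * dim_row B \<Longrightarrow> j < dim_col A * dim_col B \<Longrightarrow>
  kron A B $$ (i,j) = A $$ (i div dim_row B, j div dim_col B) * B $$ (i mod dim_row B, j mod dim_col B)"
  by (auto simp: kron_def)

lemma kron_mult: assumes "dim_col A = dim_row B"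
  shows "kron (1\<^sub>m r) A * kron (1\<^sub>m r) B = kron (1\<^sub>m r) (A * B)"
proof (rule eq_matI)
  fix i j assume ij: "i < dim_row (kron (1\<^sub>m r) (A * B))" "j < dim_col (kron (1\<^sub>m r) (A * B))"
  let ?a = "dim_row A" and ?c = "dim_col A" and ?d = "dim_col B"
  have a0: "?a > 0" "?d > 0" using ij by (auto intro!: Nat.gr0I)
  have ia: "i div ?a < r" "i mod ?a < ?a" using ij a0 by (auto simp: less_mult_imp_div_less)
  have jd: "j div ?d < r" "j mod ?d < ?d" using ij a0 by (auto simp: less_mult_imp_div_less)
  have "(kron (1\<^sub>m r) A * kron (1\<^sub>m r) B) $$ (i,j) =
    (\<Sum>k<r*?c. kron (1\<^sub>m r) A $$ (i,k) * kron (1\<^sub>m r) B $$ (k,j))"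
    using ij assms by (simp add: scalar_prod_def lessThan_atLeast0)
  also have "\<dots> = (\<Sum>q<r. \<Sum>p<?c. kron (1\<^sub>m r) A $$ (i,q*?c+p) * kron (1\<^sub>m r) B $$ (q*?c+p,j))"
    by (rule sum_split_prod)
  also have "\<dots> = (\<Sum>q<r. \<Sum>p<?c. (if q = i div ?a \<and> q = j div ?d then A $$ (i mod ?a, p) * B $$ (p, j mod ?d) else 0))"
  proof (intro sum.cong refl)
    fix q p assume qp: "q \<in> {..<r}" "p \<in> {..<?c}"
    have k1: "(Suc q)*?c \<le> r*?c" by (rule mult_le_mono1) (use qp in auto)
    have k: "q*?c+p < r * ?c" using qp k1 by simp
    have dm: "(q*?c+p) div ?c = q" "(q*?c+p) mod ?c = p" using qp by auto
    show "kron (1\<^sub>m r) A $$ (i,q*?c+p) * kron (1\<^sub>m r) B $$ (q*?c+p,j) = 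
      (if q = i div ?a \<and> q = j div ?d then A $$ (i mod ?a, p) * B $$ (p, j mod ?d) else 0)"
      using ij qp k dm ia jd assms by (simp add: kron_index)
  qed
  also have "\<dots> = (\<Sum>q<r. if q = i div ?a then (if i div ?a = j div ?d then (\<Sum>p<?c. A $$ (i mod ?a, p) * B $$ (p, j mod ?d)) else 0) else 0)"
    by (rule sum.cong) auto
  also have "\<dots> = (if i div ?a = j div ?d then (\<Sum>p<?c. A $$ (i mod ?a, p) * B $$ (p, j mod ?d)) else 0)"
    using ia by (subst sum.delta) auto
  also have "\<dots> = kron (1\<^sub>m r) (A * B) $$ (i,j)"
    using ij ia jd assms by (simp add: kron_index scalar_prod_def lessThan_atLeast0)
  finally show "(kron (1\<^sub>m r) A * kron (1\<^sub>m r) B) $$ (i,j) = kron (1\<^sub>m r) (A * B) $$ (i,j)" .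
qed auto

lemma kron_one: "kron (1\<^sub>m r) (1\<^sub>m m) = 1\<^sub>m (r*m)"
proof (rule eq_matI)
  fix i j assume ij: "i < dim_row (1\<^sub>m (r*m))" "j < dim_col (1\<^sub>m (r*m))"
  hence m0: "m > 0" by (auto intro!: Nat.gr0I)
  have d: "i div m < r" "j div m < r" using ij m0 by (auto simp: less_mult_imp_div_less)
  have "(i div m = j div m \<and> i mod m = j mod m) = (i = j)"
    by (metis div_mult_mod_eq)
  thus "kron (1\<^sub>m r) (1\<^sub>m m) $$ (i,j) = 1\<^sub>m (r*m) $$ (i,j)"
    using ij m0 d by (auto simp: kron_index)
qed auto

lemma vecm_dim[simp]: "dim_vec (vecm M) = dim_row M * dim_col M"
  by (simp add: vecm_def)

lemma vecm_index: "k < dim_row M * dim_col M \<Longrightarrow> vecm M $ k = M $$ (k mod dim_row M, k div dim_row M)"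
  by (simp add: vecm_def)

definition unvec :: "nat \<Rightarrow> nat \<Rightarrow> real vec \<Rightarrow> real mat" where
  "unvec a b w = mat a b (\<lambda>(i,j). w $ (j*a+i))"

lemma unvec_carrier[simp]: "unvec a b w \<in> carrier_mat a b" by (simp add: unvec_def)

lemma vecm_unvec: assumes "w \<in> carrier_vec (a*b)" shows "vecm (unvec a b w) = w"
proof (rule eq_vecI)
  fix k assume "k < dim_vec w"
  hence k: "k < a*b" using assms by simp
  hence a0: "a > 0" by (auto intro!: Nat.gr0I)
  have "k div a < b" using k by (metis less_mult_imp_div_less mult.commute)
  then show "vecm (unvec a b w) $ k = w $ k" using k a0
    by (simp add: vecm_index unvec_def mult.commute)
qed (use assms in \<open>auto simp: unvec_def\<close>)

lemma vecm_mult: assumes "Xp \<in> carrier_mat n m" "D \<in> carrier_mat m r"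
  shows "vecm (Xp * D) = kron (1\<^sub>m r) Xp *\<^sub>v vecm D"
proof (rule eq_vecI)
  fix k assume "k < dim_vec (kron (1\<^sub>m r) Xp *\<^sub>v vecm D)"
  hence k: "k < n * r" using assms by (simp add: mult.commute)
  hence n0: "n > 0" by (auto intro!: Nat.gr0I)
  have kd: "k div n < r" "k mod n < n" using k n0 by (auto simp: less_mult_imp_div_less mult.commute)
  have "(kron (1\<^sub>m r) Xp *\<^sub>v vecm D) $ k = (\<Sum>l<r*m. kron (1\<^sub>m r) Xp $$ (k,l) * vecm D $ l)"
  proof -
    have "k < r * n" using k by (simp add: mult.commute)
    thus ?thesis using assms by (simp add: scalar_prod_def lessThan_atLeast0 mult.commute)
  qed
  also have "\<dots> = (\<Sum>q<r. \<Sum>p<m. kron (1\<^sub>m r) Xp $$ (k,q*m+p) * vecm D $ (q*m+p))"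
    by (rule sum_split_prod)
  also have "\<dots> = (\<Sum>q<r. \<Sum>p<m. if q = k div n then Xp $$ (k mod n, p) * D $$ (p, q) else 0)"
  proof (intro sum.cong refl)
    fix q p assume qp: "q \<in> {..<r}" "p \<in> {..<m}"
    have k1: "(Suc q)*m \<le> r*m" by (rule mult_le_mono1) (use qp in auto)
    have kk: "q*m+p < r * m" using qp k1 by simp
    have dm: "(q*m+p) div m = q" "(q*m+p) mod m = p" using qp by auto
    show "kron (1\<^sub>m r) Xp $$ (k,q*m+p) * vecm D $ (q*m+p) = 
      (if q = k div n then Xp $$ (k mod n, p) * D $$ (p, q) else 0)"
      using qp kk dm kd assms k by (auto simp: kron_index vecm_index mult.commute)
  qed
  also have "\<dots> = (\<Sum>q<r. if q = k div n then (\<Sum>p<m. Xp $$ (k mod n, p) * D $$ (p, q)) else 0)"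
    by (rule sum.cong) auto
  also have "\<dots> = (\<Sum>p<m. Xp $$ (k mod n, p) * D $$ (p, k div n))"
    using kd by (subst sum.delta) auto
  also have "\<dots> = vecm (Xp * D) $ k"
    using kd k assms by (simp add: vecm_index scalar_prod_def lessThan_atLeast0)
  finally show "vecm (Xp * D) $ k = (kron (1\<^sub>m r) Xp *\<^sub>v vecm D) $ k" by simp
qed (use assms in auto)

lemma hcat_facts: assumes X: "X \<in> carrier_mat n r" and Xp: "Xp \<in> carrier_mat n m"
  and o: "orth_square (hcat X Xp)"
  shows "transpose_mat Xp * Xp = 1\<^sub>m m" "transpose_mat X * Xp = 0\<^sub>m r m"
proof -
  let ?H = "hcat X Xp"
  have Hd: "dim_row ?H = n" "dim_col ?H = r + m" using X Xp by (auto simp: hcat_def)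
  have HH: "transpose_mat ?H * ?H = 1\<^sub>m (r+m)" using o Hd by (simp add: orth_square_def)
  have Hi1: "?H $$ (k, i) = X $$ (k, i)" if "k < n" "i < r" for k i using that X Xp by (simp add: hcat_def)
  have Hi2: "?H $$ (k, r+i) = Xp $$ (k, i)" if "k < n" "i < m" for k i using that X Xp by (simp add: hcat_def)
  have e: "(transpose_mat ?H * ?H) $$ (i,j) = (\<Sum>k<n. ?H $$ (k,i) * ?H $$ (k,j))" if "i < r+m" "j < r+m" for i j
    using that Hd by (simp add: scalar_prod_def lessThan_atLeast0)
  show "transpose_mat Xp * Xp = 1\<^sub>m m"
  proof (rule eq_matI)
    fix i j assume ij: "i < dim_row (1\<^sub>m m)" "j < dim_col (1\<^sub>m m)"
    have "(transpose_mat Xp * Xp) $$ (i,j) = (\<Sum>k<n. ?H $$ (k,r+i) * ?H $$ (k,r+j))"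
      using ij Xp by (simp add: scalar_prod_def lessThan_atLeast0 Hi2)
    also have "\<dots> = (transpose_mat ?H * ?H) $$ (r+i,r+j)" using ij by (simp add: e)
    also have "\<dots> = 1\<^sub>m m $$ (i,j)" using ij by (simp add: HH)
    finally show "(transpose_mat Xp * Xp) $$ (i,j) = 1\<^sub>m m $$ (i,j)" .
  qed (use Xp in auto)
  show "transpose_mat X * Xp = 0\<^sub>m r m"
  proof (rule eq_matI)
    fix i j assume ij: "i < dim_row (0\<^sub>m r m)" "j < dim_col (0\<^sub>m r m)"
    have "(transpose_mat X * Xp) $$ (i,j) = (\<Sum>k<n. ?H $$ (k,i) * ?H $$ (k,r+j))"
      using ij X Xp by (simp add: scalar_prod_def lessThan_atLeast0 Hi1 Hi2)
    also have "\<dots> = (transpose_mat ?H * ?H) $$ (i,r+j)" using ij by (simp add: e)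
    also have "\<dots> = 0\<^sub>m r m $$ (i,j)" using ij by (simp add: HH)
    finally show "(transpose_mat X * Xp) $$ (i,j) = 0\<^sub>m r m $$ (i,j)" .
  qed (use X Xp in auto)
qed

lemma part1:
  fixes Xp Ahat A :: "real mat"
  assumes Xp_dim: "Xp \<in> carrier_mat n m"
    and Ahat_dim: "Ahat \<in> carrier_mat (m * r) (m * r)"
    and A_dim: "A \<in> carrier_mat (n * r) (n * r)"
    and A_corr: "\<forall>D1 D2. D1 \<in> carrier_mat m r \<longrightarrow> D2 \<in> carrier_mat m r \<longrightarrow>
                   vecm D2 = Ahat *\<^sub>v vecm D1 \<longrightarrow> A *\<^sub>v vecm (Xp * D1) = vecm (Xp * D2)"
    and A_proj: "\<forall>w \<in> carrier_vec (n * r).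
                   A *\<^sub>v w = A *\<^sub>v (kron (1\<^sub>m r) (Xp * transpose_mat Xp) *\<^sub>v w)"
  shows "A = kron (1\<^sub>m r) Xp * Ahat * kron (1\<^sub>m r) (transpose_mat Xp)"
proof (rule eq_mat_vecI[OF A_dim])
  show "kron (1\<^sub>m r) Xp * Ahat * kron (1\<^sub>m r) (transpose_mat Xp) \<in> carrier_mat (n * r) (n * r)"
    using Xp_dim Ahat_dim by (auto simp: mult.commute)
  fix w :: "real vec" assume w: "w \<in> carrier_vec (n * r)"
  define Wm where "Wm = unvec n r w"
  have Wm: "Wm \<in> carrier_mat n r" "vecm Wm = w" using w by (auto simp: Wm_def vecm_unvec)
  define D1 where "D1 = transpose_mat Xp * Wm"
  have D1: "D1 \<in> carrier_mat m r" using Xp_dim Wm by (simp add: D1_def)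
  define D2 where "D2 = unvec m r (Ahat *\<^sub>v vecm D1)"
  have D2: "D2 \<in> carrier_mat m r" "vecm D2 = Ahat *\<^sub>v vecm D1"
  proof -
    have v1: "vecm D1 \<in> carrier_vec (m*r)" using D1 unfolding carrier_vec_def carrier_mat_def by simp
    have "Ahat *\<^sub>v vecm D1 \<in> carrier_vec (m*r)" by (rule mult_mat_vec_carrier[OF Ahat_dim v1])
    thus "D2 \<in> carrier_mat m r" "vecm D2 = Ahat *\<^sub>v vecm D1" by (auto simp: D2_def vecm_unvec)
  qed
  have "kron (1\<^sub>m r) (Xp * transpose_mat Xp) *\<^sub>v w = vecm (Xp * transpose_mat Xp * Wm)"
    using Wm Xp_dim by (subst vecm_mult[of _ n n]) auto
  also have "Xp * transpose_mat Xp * Wm = Xp * D1" unfolding D1_def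
    using Xp_dim Wm by (subst assoc_mult_mat[of _ n m _ n]) auto
  finally have Pw: "kron (1\<^sub>m r) (Xp * transpose_mat Xp) *\<^sub>v w = vecm (Xp * D1)" .
  have "A *\<^sub>v w = vecm (Xp * D2)" using A_proj w Pw A_corr D1 D2 by auto
  also have "\<dots> = kron (1\<^sub>m r) Xp *\<^sub>v (Ahat *\<^sub>v vecm D1)"
    using vecm_mult[OF Xp_dim D2(1)] D2(2) by simp
  also have "vecm D1 = kron (1\<^sub>m r) (transpose_mat Xp) *\<^sub>v w"
    unfolding D1_def using vecm_mult[of "transpose_mat Xp" m n Wm r] Xp_dim Wm by simp
  also have "kron (1\<^sub>m r) Xp *\<^sub>v (Ahat *\<^sub>v (kron (1\<^sub>m r) (transpose_mat Xp) *\<^sub>v w))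
     = (kron (1\<^sub>m r) Xp * Ahat * kron (1\<^sub>m r) (transpose_mat Xp)) *\<^sub>v w"
  proof -
    have c1: "kron (1\<^sub>m r) Xp \<in> carrier_mat (n*r) (m*r)" "kron (1\<^sub>m r) (transpose_mat Xp) \<in> carrier_mat (m*r) (n*r)"
      using Xp_dim unfolding carrier_mat_def by (auto simp: mult.commute)
    show ?thesis
      using assoc_mult_mat_vec[OF mult_carrier_mat[OF c1(1) Ahat_dim] c1(2) w]
        assoc_mult_mat_vec[OF c1(1) Ahat_dim mult_mat_vec_carrier[OF c1(2) w]] by simp
  qed
  finally show "A *\<^sub>v w = (kron (1\<^sub>m r) Xp * Ahat * kron (1\<^sub>m r) (transpose_mat Xp)) *\<^sub>v w" .
qed

lemma sandwich:
  fixes Xp Ahat A L R :: "real mat"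
  assumes Xp_dim: "Xp \<in> carrier_mat n m" and Ahat_dim: "Ahat \<in> carrier_mat (m * r) (m * r)"
    and Aeq: "A = kron (1\<^sub>m r) Xp * Ahat * kron (1\<^sub>m r) (transpose_mat Xp)"
    and L: "L \<in> carrier_mat m n" and R: "R \<in> carrier_mat n m"
    and LX: "L * Xp = 1\<^sub>m m" and XR: "transpose_mat Xp * R = 1\<^sub>m m"
  shows "kron (1\<^sub>m r) L * A * kron (1\<^sub>m r) R = Ahat"
proof -
  let ?K = "kron (1\<^sub>m r)"
  have c: "?K L \<in> carrier_mat (r*m) (r*n)" "?K Xp \<in> carrier_mat (r*n) (r*m)" "Ahat \<in> carrier_mat (r*m) (r*m)"
     "?K (transpose_mat Xp) \<in> carrier_mat (r*m) (r*n)" "?K R \<in> carrier_mat (r*n) (r*m)"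
    using assms by (auto simp: mult.commute)
  have "?K L * A * ?K R = ?K L * ?K Xp * Ahat * (?K (transpose_mat Xp) * ?K R)"
  proof -
    have d: "dim_row Xp = n" "dim_col Xp = m" "dim_row L = m" "dim_col L = n" "dim_row R = n" "dim_col R = m"
       "dim_row Ahat = r*m" "dim_col Ahat = r*m" using Xp_dim Ahat_dim L R by (auto simp: mult.commute)
    show ?thesis unfolding Aeq by (simp add: massoc d)
  qed
  also have "\<dots> = ?K (L * Xp) * Ahat * ?K (transpose_mat Xp * R)"
    using L Xp_dim R by (simp add: kron_mult)
  also have "\<dots> = Ahat" unfolding LX XR kron_one using c by simp
  finally show ?thesis .
qed

lemma diag_id: assumes "S \<in> carrier_mat r r" "\<forall>i<r. \<forall>j<r. i \<noteq> j \<longrightarrow> S $$ (i,j) = 0"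
  shows "diag_fun (\<lambda>s. s) S = S"
  using assms by (intro eq_matI) auto

lemma diag_add: "dim_row S = dim_col S \<Longrightarrow> diag_fun (\<lambda>s. f s + g s) S = diag_fun f S + diag_fun g S"
  by (intro eq_matI) auto
lemma diag_one: "S \<in> carrier_mat r r \<Longrightarrow> diag_fun (\<lambda>s. 1) S = 1\<^sub>m r"
  by (intro eq_matI) auto
lemma diag_zero: "S \<in> carrier_mat r r \<Longrightarrow> diag_fun (\<lambda>s. 0) S = 0\<^sub>m r r"
  by (intro eq_matI) auto

lemma orth_sq: assumes "V \<in> carrier_mat r r" "transpose_mat V * V = 1\<^sub>m r" shows "V * transpose_mat V = (1\<^sub>m r :: real mat)"
  using mat_mult_left_right_inverse[of "transpose_mat V" r V] assms by auto

lemma rassoc_eq: "A * B = C \<Longrightarrow> dim_col A = dim_row B \<Longrightarrow> dim_col B = dim_row R \<Longrightarrow> (A::real mat) * (B * R) = C * R"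
  by (metis massoc)

lemma transp_alt: assumes "X \<in> carrier_mat n r" "U \<in> carrier_mat n r" "S \<in> carrier_mat r r" "V \<in> carrier_mat r r"
  shows "transp X U S V t = 1\<^sub>m n + - (X * (V * (diag_fun (\<lambda>s. sin (s*t)) S * transpose_mat U)))
     + U * (diag_fun (\<lambda>s. cos (s*t) - 1) S * transpose_mat U)"
proof -
  have d: "dim_row X = n" "dim_col X = r" "dim_row U = n" "dim_col U = r" "dim_row S = r" "dim_col S = r"
    "dim_row V = r" "dim_col V = r" using assms by auto
  have c: "diag_fun (\<lambda>s. cos (s*t)) S = diag_fun (\<lambda>s. cos (s*t) - 1) S + 1\<^sub>m r"
    using assms by (intro eq_matI) auto
  show ?thesis unfolding transp_def c
    apply (simp add: mnorm mminus d)
    apply (intro eq_matI)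
    apply (simp_all add: d)
    done
qed

lemma svd_unique:
  fixes U S V U2 S2 V2 :: "real mat"
  assumes U: "U \<in> carrier_mat n r" and S: "S \<in> carrier_mat r r" and V: "V \<in> carrier_mat r r"
    and U2: "U2 \<in> carrier_mat n r" and S2: "S2 \<in> carrier_mat r r" and V2: "V2 \<in> carrier_mat r r"
    and Sdg: "\<forall>i<r. \<forall>j<r. i \<noteq> j \<longrightarrow> S $$ (i,j) = 0" and Snn: "\<forall>i<r. S $$ (i,i) \<ge> 0"
    and S2dg: "\<forall>i<r. \<forall>j<r. i \<noteq> j \<longrightarrow> S2 $$ (i,j) = 0" and S2nn: "\<forall>i<r. S2 $$ (i,i) \<ge> 0"
    and VV: "transpose_mat V * V = 1\<^sub>m r" and V2V2: "transpose_mat V2 * V2 = 1\<^sub>m r"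
    and U2U2: "transpose_mat U2 * U2 = 1\<^sub>m r"
    and SUUS: "S * (transpose_mat U * (U * S)) = diag_fun (\<lambda>s. s * s) S"
    and eq: "U2 * (S2 * transpose_mat V2) = U * (S * transpose_mat V)"
  shows "V2 * (diag_fun (\<lambda>s. s * k s) S2 * transpose_mat U2) = V * (diag_fun (\<lambda>s. s * k s) S * transpose_mat U)"
    and "U2 * (diag_fun (\<lambda>s. s * s * k s) S2 * transpose_mat U2) = U * (diag_fun (\<lambda>s. s * s * k s) S * transpose_mat U)"
proof -
  have d: "dim_row U = n" "dim_col U = r" "dim_row S = r" "dim_col S = r" "dim_row V = r" "dim_col V = r"
    "dim_row U2 = n" "dim_col U2 = r" "dim_row S2 = r" "dim_col S2 = r" "dim_row V2 = r" "dim_col V2 = r"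
    using assms by auto
  have I1: "diag_fun (\<lambda>s. s) S = S" by (rule diag_id[OF S Sdg])
  have I2: "diag_fun (\<lambda>s. s) S2 = S2" by (rule diag_id[OF S2 S2dg])
  have VVt: "V * transpose_mat V = 1\<^sub>m r" by (rule orth_sq[OF V VV])
  have V2V2t: "V2 * transpose_mat V2 = 1\<^sub>m r" by (rule orth_sq[OF V2 V2V2])
  have o: "\<And>R. dim_row R = r \<Longrightarrow> transpose_mat V * (V * R) = R"
    "\<And>R. dim_row R = r \<Longrightarrow> transpose_mat V2 * (V2 * R) = R"
    "\<And>R. dim_row R = r \<Longrightarrow> V2 * (transpose_mat V2 * R) = R"
    "\<And>R. dim_row R = r \<Longrightarrow> transpose_mat U2 * (U2 * R) = R"
    using VV V2V2 V2V2t U2U2 by (simp_all add: massoc[symmetric] d)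
  have eq': "U2 * (diag_fun (\<lambda>s. s) S2 * transpose_mat V2) = U * (diag_fun (\<lambda>s. s) S * transpose_mat V)" using eq I1 I2 by simp
  have SUUS': "diag_fun (\<lambda>s. s) S * (transpose_mat U * (U * diag_fun (\<lambda>s. s) S)) = diag_fun (\<lambda>s. s * s) S" using SUUS I1 by simp
  have St: "transpose_mat (diag_fun (\<lambda>s. s) S) = diag_fun (\<lambda>s. s) S" "transpose_mat (diag_fun (\<lambda>s. s) S2) = diag_fun (\<lambda>s. s) S2"
    using diag_trans[of S "\<lambda>s. s"] diag_trans[of S2 "\<lambda>s. s"] d by auto
  define M where "M = transpose_mat V2 * V"
  have Md: "dim_row M = r" "dim_col M = r" by (auto simp: M_def d)
  define D where "D = U * (diag_fun (\<lambda>s. s) S * transpose_mat V)"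
  have DD1: "transpose_mat D * D = V * (diag_fun (\<lambda>s. s * s) S * transpose_mat V)"
    unfolding D_def by (simp add: mnorm d St SUUS'[symmetric])
  have DD2: "transpose_mat D * D = V2 * (diag_fun (\<lambda>s. s * s) S2 * transpose_mat V2)"
    unfolding D_def eq'[symmetric] by (simp add: mnorm d St o diag_diag_assoc )
  have key: "diag_fun (\<lambda>s. s * s) S2 * M = M * diag_fun (\<lambda>s. s * s) S"
  proof -
    have "transpose_mat V2 * (transpose_mat D * D) * V = diag_fun (\<lambda>s. s * s) S2 * M"
      unfolding DD2 M_def by (simp add: massoc d o)
    moreover have "transpose_mat V2 * (transpose_mat D * D) * V = M * diag_fun (\<lambda>s. s * s) S"
      unfolding DD1 M_def by (simp add: massoc d o VV)
    ultimately show ?thesis by simp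
  qed
  have comm: "diag_fun g S2 * M = M * diag_fun g S" for g
  proof (rule eq_matI)
    fix i j assume ij: "i < dim_row (M * diag_fun g S)" "j < dim_col (M * diag_fun g S)"
    hence ij': "i < r" "j < r" by (auto simp: Md d)
    have k1: "(diag_fun (\<lambda>s. s * s) S2 * M) $$ (i,j) = (M * diag_fun (\<lambda>s. s * s) S) $$ (i,j)" using key by simp
    have k2: "(diag_fun (\<lambda>s. s * s) S2 * M) $$ (i,j) = S2 $$ (i,i) * S2 $$ (i,i) * M $$ (i,j)"
      by (rule diag_mult_index[of S2 M i j "\<lambda>s. s * s"]) (use ij' d Md in auto)
    have k3: "(M * diag_fun (\<lambda>s. s * s) S) $$ (i,j) = M $$ (i,j) * (S $$ (j,j) * S $$ (j,j))"
      by (rule mult_diag_index[of S M i j "\<lambda>s. s * s"]) (use ij' d Md in auto)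
    have e: "S2 $$ (i,i) * S2 $$ (i,i) * M $$ (i,j) = M $$ (i,j) * (S $$ (j,j) * S $$ (j,j))"
      using trans[OF trans[OF k2[symmetric] k1] k3] .
    have kg: "g (S2 $$ (i,i)) * M $$ (i,j) = M $$ (i,j) * g (S $$ (j,j))"
    proof (cases "M $$ (i,j) = 0")
      case False
      with e have "S2 $$ (i,i) * S2 $$ (i,i) = S $$ (j,j) * S $$ (j,j)" by simp
      moreover have "S2 $$ (i,i) \<ge> 0" "S $$ (j,j) \<ge> 0" using S2nn Snn ij' by auto
      ultimately have "S2 $$ (i,i) = S $$ (j,j)"
        using power2_eq_iff_nonneg[of "S2 $$ (i,i)" "S $$ (j,j)"] by (simp add: power2_eq_square)
      thus ?thesis by simp
    qed simp
    have k4: "(diag_fun g S2 * M) $$ (i,j) = g (S2 $$ (i,i)) * M $$ (i,j)"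
      by (rule diag_mult_index[of S2 M i j g]) (use ij' d Md in auto)
    have k5: "(M * diag_fun g S) $$ (i,j) = M $$ (i,j) * g (S $$ (j,j))"
      by (rule mult_diag_index[of S M i j g]) (use ij' d Md in auto)
    show "(diag_fun g S2 * M) $$ (i,j) = (M * diag_fun g S) $$ (i,j)" by (rule trans[OF k4 trans[OF kg k5[symmetric]]])
  qed (auto simp: Md d)
  have MM: "transpose_mat M * M = 1\<^sub>m r"
    unfolding M_def by (simp add: mnorm d o VV)
  have U2S2: "U2 * diag_fun (\<lambda>s. s) S2 = U * (diag_fun (\<lambda>s. s) S * transpose_mat M)"
  proof -
    have "U2 * diag_fun (\<lambda>s. s) S2 = U2 * ((diag_fun (\<lambda>s. s) S2) * transpose_mat V2) * V2" by (simp add: massoc d V2V2)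
    also have "\<dots> = U * (diag_fun (\<lambda>s. s) S * transpose_mat M)" unfolding eq' M_def by (simp add: mnorm d)
    finally show ?thesis .
  qed
  have S2U2: "(diag_fun (\<lambda>s. s) S2) * transpose_mat U2 = M * (diag_fun (\<lambda>s. s) S * transpose_mat U)"
  proof -
    have "(diag_fun (\<lambda>s. s) S2) * transpose_mat U2 = transpose_mat (U2 * diag_fun (\<lambda>s. s) S2)" by (simp add: mtrans_mult d St)
    also have "\<dots> = M * (diag_fun (\<lambda>s. s) S * transpose_mat U)" unfolding U2S2 by (simp add: mnorm d St Md)
    finally show ?thesis .
  qed
  have f1: "(\<lambda>s. s * k s) = (\<lambda>s. k s * s)" by (auto simp: mult.commute)
  show "V2 * (diag_fun (\<lambda>s. s * k s) S2 * transpose_mat U2) = V * (diag_fun (\<lambda>s. s * k s) S * transpose_mat U)"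
  proof -
    have "V2 * (diag_fun (\<lambda>s. s * k s) S2 * transpose_mat U2) = V2 * (diag_fun k S2 * ((diag_fun (\<lambda>s. s) S2) * transpose_mat U2))"
      unfolding f1 by (subst diag_diag_assoc[symmetric]) (auto simp: d I2)
    also have "\<dots> = V2 * (diag_fun k S2 * M * (diag_fun (\<lambda>s. s) S * transpose_mat U))" unfolding S2U2 by (simp add: massoc d Md)
    also have "\<dots> = V2 * (transpose_mat V2 * (V * (diag_fun k S * (diag_fun (\<lambda>s. s) S * transpose_mat U))))"
      unfolding comm unfolding M_def by (simp add: massoc d)
    also have "\<dots> = V * (diag_fun (\<lambda>s. s * k s) S * transpose_mat U)"
      unfolding f1 by (simp add: o d diag_diag_assoc )
    finally show ?thesis .
  qed
  have f2: "(\<lambda>s. s * s * k s) = (\<lambda>s. s * (k s * s))" by (auto simp: mult.commute mult.assoc)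
  show "U2 * (diag_fun (\<lambda>s. s * s * k s) S2 * transpose_mat U2) = U * (diag_fun (\<lambda>s. s * s * k s) S * transpose_mat U)"
  proof -
    have "U2 * (diag_fun (\<lambda>s. s * s * k s) S2 * transpose_mat U2) = U2 * diag_fun (\<lambda>s. s) S2 * (diag_fun k S2 * ((diag_fun (\<lambda>s. s) S2) * transpose_mat U2))"
      unfolding f2 by (simp add: massoc d diag_diag_assoc )
    also have "\<dots> = U * (diag_fun (\<lambda>s. s) S * (transpose_mat M * (diag_fun k S2 * M * (diag_fun (\<lambda>s. s) S * transpose_mat U))))"
      unfolding U2S2 S2U2 by (simp add: massoc d Md)
    also have "\<dots> = U * (diag_fun (\<lambda>s. s) S * ((transpose_mat M * M) * (diag_fun k S * (diag_fun (\<lambda>s. s) S * transpose_mat U))))"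
      unfolding comm by (simp add: massoc d Md)
    also have "\<dots> = U * (diag_fun (\<lambda>s. s * s * k s) S * transpose_mat U)"
      unfolding MM f2 by (simp add: d diag_diag_assoc )
    finally show ?thesis .
  qed
qed

locale geo =
  fixes n r m :: nat and X Xp U S V :: "real mat" and t :: real
  assumes X: "X \<in> carrier_mat n r" and Xp: "Xp \<in> carrier_mat n m" and U: "U \<in> carrier_mat n r"
    and S: "S \<in> carrier_mat r r" and V: "V \<in> carrier_mat r r"
    and XX: "transpose_mat X * X = 1\<^sub>m r" and XpXp: "transpose_mat Xp * Xp = 1\<^sub>m m"
    and XXp: "transpose_mat X * Xp = 0\<^sub>m r m"
    and UU: "transpose_mat U * U = 1\<^sub>m r" and VV: "transpose_mat V * V = 1\<^sub>m r"
    and XUS: "transpose_mat X * U * S = 0\<^sub>m r r"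
    and Sdiag: "\<forall>i<r. \<forall>j<r. i \<noteq> j \<longrightarrow> S $$ (i,j) = 0"
begin

lemma dims: "dim_row X = n" "dim_col X = r" "dim_row U = n" "dim_col U = r" "dim_row S = r" "dim_col S = r"
    "dim_row V = r" "dim_col V = r" "dim_row Xp = n" "dim_col Xp = m" using X Xp U S V by auto

lemma XpX: "transpose_mat Xp * X = 0\<^sub>m m r"
proof -
  have "transpose_mat Xp * X = transpose_mat (transpose_mat X * Xp)" by (simp add: mtrans_mult dims)
  thus ?thesis by (simp add: XXp)
qed

lemma VVt: "V * transpose_mat V = 1\<^sub>m r" using orth_sq[OF V VV] .

lemma XUf: assumes "f 0 = 0" shows "transpose_mat X * U * diag_fun f S = 0\<^sub>m r r"
proof (rule eq_matI)
  fix i j assume ij: "i < dim_row (0\<^sub>m r r)" "j < dim_col (0\<^sub>m r (r::nat))"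
  have "(transpose_mat X * U * S) $$ (i,j) = (transpose_mat X * U) $$ (i,j) * S $$ (j,j)"
    using mult_diag_index[of S "transpose_mat X * U" i j "\<lambda>s. s"] diag_id[OF S Sdiag] ij dims by simp
  hence "(transpose_mat X * U) $$ (i,j) * S $$ (j,j) = 0" using XUS ij by simp
  hence "(transpose_mat X * U) $$ (i,j) * f (S $$ (j,j)) = 0" using assms by auto
  thus "(transpose_mat X * U * diag_fun f S) $$ (i,j) = 0\<^sub>m r r $$ (i,j)"
    using mult_diag_index[of S "transpose_mat X * U" i j f] ij dims by simp
qed (auto simp: dims)

lemma fUX: assumes "f 0 = 0" shows "diag_fun f S * transpose_mat U * X = 0\<^sub>m r r"
proof -
  have "diag_fun f S * transpose_mat U * X = transpose_mat (transpose_mat X * U * diag_fun f S)"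
    by (simp add: mtrans_mult dims diag_trans massoc)
  thus ?thesis by (simp add: XUf assms)
qed

lemma zrules:
  "f 0 = 0 \<Longrightarrow> transpose_mat X * (U * diag_fun f S) = 0\<^sub>m r r"
  "f 0 = 0 \<Longrightarrow> dim_row R = r \<Longrightarrow> transpose_mat X * (U * (diag_fun f S * R)) = 0\<^sub>m r (dim_col R)"
  "f 0 = 0 \<Longrightarrow> diag_fun f S * (transpose_mat U * X) = 0\<^sub>m r r"
  "f 0 = 0 \<Longrightarrow> dim_row R = r \<Longrightarrow> diag_fun f S * (transpose_mat U * (X * R)) = 0\<^sub>m r (dim_col R)"
proof -
  assume f: "f 0 = 0"
  show 1: "transpose_mat X * (U * diag_fun f S) = 0\<^sub>m r r" using XUf[of f, OF f] by (simp add: massoc dims)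
  show 3: "diag_fun f S * (transpose_mat U * X) = 0\<^sub>m r r" using fUX[of f, OF f] by (simp add: massoc dims)
  assume R: "dim_row R = r"
  have "transpose_mat X * (U * (diag_fun f S * R)) = transpose_mat X * (U * diag_fun f S) * R"
    using R by (simp add: massoc dims)
  thus "transpose_mat X * (U * (diag_fun f S * R)) = 0\<^sub>m r (dim_col R)" using 1 R by (simp add: mzerol)
  have "diag_fun f S * (transpose_mat U * (X * R)) = diag_fun f S * (transpose_mat U * X) * R"
    using R by (simp add: massoc dims)
  thus "diag_fun f S * (transpose_mat U * (X * R)) = 0\<^sub>m r (dim_col R)" using 3 R by (simp add: mzerol)
qed

lemma orules:
  "dim_row R = r \<Longrightarrow> transpose_mat X * (X * R) = R"
  "dim_row R = r \<Longrightarrow> transpose_mat U * (U * R) = R"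
  "dim_row R = r \<Longrightarrow> transpose_mat V * (V * R) = R"
  "dim_row R = r \<Longrightarrow> V * (transpose_mat V * R) = R"
  "dim_row R = m \<Longrightarrow> transpose_mat Xp * (Xp * R) = R"
  "dim_row R = m \<Longrightarrow> transpose_mat X * (Xp * R) = 0\<^sub>m r (dim_col R)"
  "dim_row R = r \<Longrightarrow> transpose_mat Xp * (X * R) = 0\<^sub>m m (dim_col R)"
  using XX UU VV VVt XpXp XXp XpX by (simp_all add: massoc[symmetric] dims mzerol)

lemma diag_rules:
  "diag_fun f S * diag_fun g S = diag_fun (\<lambda>s. f s * g s) S"
  "dim_row R = r \<Longrightarrow> diag_fun f S * (diag_fun g S * R) = diag_fun (\<lambda>s. f s * g s) S * R"
  "transpose_mat (diag_fun f S) = diag_fun f S"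
  by (simp_all add: diag_diag diag_diag_assoc diag_trans dims)

lemmas NF = mnorm mminus dims zrules orules diag_rules XX UU VV VVt XpXp XXp XpX

lemma sin_sq: "sin x * sin x = 1 - cos x * cos (x::real)"
  using sin_cos_squared_add[of x] by (simp add: power2_eq_square)

definition "Mf f = transpose_mat Xp * (U * (diag_fun f S * (transpose_mat U * Xp)))"

lemma Mf_dims[simp]: "dim_row (Mf f) = m" "dim_col (Mf f) = m" by (simp_all add: Mf_def dims)

lemma Mf_index: assumes "i < m" "j < m"
  shows "Mf f $$ (i,j) = (\<Sum>k<r. (transpose_mat Xp * U) $$ (i,k) * f (S $$ (k,k)) * (transpose_mat U * Xp) $$ (k,j))"
proof -
  have "Mf f = (transpose_mat Xp * U) * (diag_fun f S * (transpose_mat U * Xp))"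
    unfolding Mf_def by (simp add: massoc dims)
  hence "Mf f $$ (i,j) = (\<Sum>k<r. (transpose_mat Xp * U) $$ (i,k) * (diag_fun f S * (transpose_mat U * Xp)) $$ (k,j))"
    using assms by (simp add: dims scalar_prod_def lessThan_atLeast0)
  also have "\<dots> = (\<Sum>k<r. (transpose_mat Xp * U) $$ (i,k) * f (S $$ (k,k)) * (transpose_mat U * Xp) $$ (k,j))"
    using assms by (intro sum.cong refl, subst diag_mult_index) (auto simp: dims)
  finally show ?thesis .
qed

definition "T = 1\<^sub>m n + - (X * (V * (diag_fun (\<lambda>s. sin (s*t)) S * transpose_mat U)))
     + U * (diag_fun (\<lambda>s. cos (s*t) - 1) S * transpose_mat U)"

lemma goal1: "transpose_mat (T * Xp) * (T * Xp) = 1\<^sub>m m"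
  unfolding T_def
  apply (simp add: NF)
  apply (simp only: Mf_def[symmetric])
  apply (intro eq_matI)
   apply (simp_all add: Mf_index sum.distrib[symmetric])
  apply (intro sum.neutral ballI)
  apply (simp add: sin_sq algebra_simps)
  done

definition "W = X * (V * diag_fun (\<lambda>s. sin (s*t)) S) + - (U * diag_fun (\<lambda>s. cos (s*t) - 1) S) + - U"
definition "Xt = X + X * (V * (diag_fun (\<lambda>s. cos (s*t) - 1) S * transpose_mat V)) + U * (diag_fun (\<lambda>s. sin (s*t)) S * transpose_mat V)"

lemma goal2: "transpose_mat Xp * ((1\<^sub>m n + - (Xt * (V * (diag_fun (\<lambda>s. sin (s*t)) S * transpose_mat W)))
     + W * (diag_fun (\<lambda>s. cos (s*t) - 1) S * transpose_mat W)) * (T * Xp)) = 1\<^sub>m m"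
  unfolding T_def W_def Xt_def
  apply (simp add: NF)
  apply (simp only: Mf_def[symmetric])
  apply (intro eq_matI)
   apply (simp_all add: Mf_index sum.distrib[symmetric])
  apply (intro sum.neutral ballI)
  apply (simp add: sin_sq algebra_simps)
  done

lemma TDelta: "- (T * (U * (diag_fun (\<lambda>s. s) S * transpose_mat V))) = W * (diag_fun (\<lambda>s. s) S * transpose_mat V)"
  unfolding T_def W_def
  apply (simp add: NF)
  apply (intro eq_matI)
   apply (simp_all add: dims)
  done

lemma WW: "diag_fun (\<lambda>s. s) S * (transpose_mat W * (W * diag_fun (\<lambda>s. s) S)) = diag_fun (\<lambda>s. s * s) S"
  unfolding W_def
  apply (simp add: NF)
  apply (intro eq_matI)
   apply (simp_all add: dims)
  apply (simp add: sin_sq algebra_simps)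
  done

lemma geod_alt: "geod X U S V t = Xt"
proof -
  have c: "diag_fun (\<lambda>s. cos (s*t)) S = diag_fun (\<lambda>s. cos (s*t) - 1) S + 1\<^sub>m r"
    using S by (intro eq_matI) auto
  show ?thesis unfolding geod_def Xt_def c
    apply (simp add: NF)
    apply (intro eq_matI)
     apply (simp_all add: dims)
    done
qed

end

lemma fun_sin: "(\<lambda>s. s * (sin (s*t) / s)) = (\<lambda>s::real. sin (s*t))"
  by (rule ext) auto
lemma fun_cos: "(\<lambda>s. s * s * ((cos (s*t) - 1) / (s * s))) = (\<lambda>s::real. cos (s*t) - 1)"
  by (rule ext) auto

lemma part3:
  fixes n r :: nat and X Xp Delta U S V Ahat A U2 S2 V2 :: "real mat" and t :: real
  assumes X_dim: "X \<in> carrier_mat n r"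
    and X_orth: "transpose_mat X * X = 1\<^sub>m r"
    and Xp_dim: "Xp \<in> carrier_mat n (n - r)"
    and XpXp: "transpose_mat Xp * Xp = 1\<^sub>m (n - r)"
    and XXp: "transpose_mat X * Xp = 0\<^sub>m r (n - r)"
    and Delta_dim: "Delta \<in> carrier_mat n r"
    and Delta_tan: "transpose_mat X * Delta = 0\<^sub>m r r"
    and svd: "thin_svd Delta U S V"
    and Ahat_dim: "Ahat \<in> carrier_mat ((n - r) * r) ((n - r) * r)"
    and Aeq: "A = kron (1\<^sub>m r) Xp * Ahat * kron (1\<^sub>m r) (transpose_mat Xp)"
    and svd2: "thin_svd (- (transp X U S V t * Delta)) U2 S2 V2"
  shows "kron (1\<^sub>m r) (transpose_mat (transp X U S V t * Xp)) *
     (kron (1\<^sub>m r) (transp X U S V t) * A * kron (1\<^sub>m r) (transp (geod X U S V t) U2 S2 V2 t)) *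
     kron (1\<^sub>m r) (transp X U S V t * Xp) = Ahat"
proof -
  let ?m = "n - r"
  from svd Delta_dim have U: "U \<in> carrier_mat n r" and S: "S \<in> carrier_mat r r" and V: "V \<in> carrier_mat r r"
    and UU: "transpose_mat U * U = 1\<^sub>m r" and Sdg: "\<forall>i<r. \<forall>j<r. i \<noteq> j \<longrightarrow> S $$ (i,j) = 0"
    and Snn: "\<forall>i<r. S $$ (i,i) \<ge> 0" and VV: "transpose_mat V * V = 1\<^sub>m r"
    and Deq: "Delta = U * S * transpose_mat V"
    unfolding thin_svd_def by auto
  have I1: "diag_fun (\<lambda>s. s) S = S" by (rule diag_id[OF S Sdg])
  have XUS: "transpose_mat X * U * S = 0\<^sub>m r r"
  proof -
    have "transpose_mat X * Delta * V = transpose_mat X * U * S * (transpose_mat V * V)"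
      unfolding Deq using X_dim U S V by (simp add: massoc)
    thus ?thesis using Delta_tan VV X_dim U S V by (simp add: mzerol)
  qed
  interpret g: geo n r ?m X Xp U S V t
    by unfold_locales (use X_dim Xp_dim U S V X_orth XpXp XXp UU VV XUS Sdg in auto)
  have T: "transp X U S V t = g.T" unfolding g.T_def by (rule transp_alt[OF X_dim U S V])
  have Xt: "geod X U S V t = g.Xt" by (rule g.geod_alt)
  have Xtc: "g.Xt \<in> carrier_mat n r" unfolding g.Xt_def using X_dim U S V by auto
  have Wc: "g.W \<in> carrier_mat n r" unfolding g.W_def using X_dim U S V by auto
  have Tc: "g.T \<in> carrier_mat n n" unfolding g.T_def using X_dim U S V by auto
  have Tdim: "dim_row (- (g.T * Delta)) = n" "dim_col (- (g.T * Delta)) = r" using Tc Delta_dim by auto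
  have svd2': "thin_svd (- (g.T * Delta)) U2 S2 V2" using svd2 unfolding T .
  note h = svd2'[unfolded thin_svd_def Tdim]
  from h have U2: "U2 \<in> carrier_mat n r" and S2: "S2 \<in> carrier_mat r r" and V2: "V2 \<in> carrier_mat r r"
    and U2U2: "transpose_mat U2 * U2 = 1\<^sub>m r" and S2dg: "\<forall>i<r. \<forall>j<r. i \<noteq> j \<longrightarrow> S2 $$ (i,j) = 0"
    and S2nn: "\<forall>i<r. S2 $$ (i,i) \<ge> 0" and V2V2: "transpose_mat V2 * V2 = 1\<^sub>m r"
    and D2eq: "- (g.T * Delta) = U2 * S2 * transpose_mat V2"
    by blast+
  have SUUS: "S * (transpose_mat g.W * (g.W * S)) = diag_fun (\<lambda>s. s * s) S"
    using g.WW unfolding I1 .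
  have eq: "U2 * (S2 * transpose_mat V2) = g.W * (S * transpose_mat V)"
  proof -
    have "U2 * (S2 * transpose_mat V2) = - (g.T * Delta)" using D2eq U2 S2 V2 by (simp add: massoc)
    also have "\<dots> = - (g.T * (U * (diag_fun (\<lambda>s. s) S * transpose_mat V)))"
      unfolding Deq I1 using U S V by (simp add: massoc)
    also have "\<dots> = g.W * (S * transpose_mat V)" using g.TDelta unfolding I1 .
    finally show ?thesis .
  qed
  note uq = svd_unique[OF Wc S V U2 S2 V2 Sdg Snn S2dg S2nn VV V2V2 U2U2 SUUS eq]
  have uq1: "V2 * (diag_fun (\<lambda>s. sin (s*t)) S2 * transpose_mat U2) = V * (diag_fun (\<lambda>s. sin (s*t)) S * transpose_mat g.W)"
    using uq(1)[of "\<lambda>s. sin (s*t) / s"] unfolding fun_sin .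
  have uq2: "U2 * (diag_fun (\<lambda>s. cos (s*t) - 1) S2 * transpose_mat U2) = g.W * (diag_fun (\<lambda>s. cos (s*t) - 1) S * transpose_mat g.W)"
    using uq(2)[of "\<lambda>s. (cos (s*t) - 1) / (s * s)"] unfolding fun_cos .
  have Ttil: "transp (geod X U S V t) U2 S2 V2 t = 1\<^sub>m n + - (g.Xt * (V * (diag_fun (\<lambda>s. sin (s*t)) S * transpose_mat g.W)))
     + g.W * (diag_fun (\<lambda>s. cos (s*t) - 1) S * transpose_mat g.W)"
    unfolding Xt transp_alt[OF Xtc U2 S2 V2] uq1 uq2 ..
  define Tt where "Tt = transp (geod X U S V t) U2 S2 V2 t"
  have Ttc: "Tt \<in> carrier_mat n n" unfolding Tt_def Ttil using Xtc Wc V S by auto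
  let ?K = "kron (1\<^sub>m r)"
  let ?L = "transpose_mat (g.T * Xp) * g.T" and ?R = "Tt * (g.T * Xp)"
  have LX: "?L * Xp = 1\<^sub>m ?m" using g.goal1 Tc Xp_dim by (simp add: massoc)
  have XR: "transpose_mat Xp * ?R = 1\<^sub>m ?m" using g.goal2 unfolding Tt_def Ttil by simp
  have "?K (transpose_mat (g.T * Xp)) * (?K g.T * A * ?K Tt) * ?K (g.T * Xp) = ?K ?L * A * ?K ?R"
  proof -
    have d: "dim_row g.T = n" "dim_col g.T = n" "dim_row Tt = n" "dim_col Tt = n" "dim_row Xp = n" "dim_col Xp = ?m"
      "dim_row A = r * n" "dim_col A = r * n"
      using Tc Ttc Xp_dim Aeq Ahat_dim by (auto simp: mult.commute)
    show ?thesis by (simp add: massoc d kron_mult[symmetric])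
  qed
  also have "\<dots> = Ahat"
    by (rule sandwich[OF Xp_dim _ Aeq]) (use Ahat_dim Tc Ttc Xp_dim LX XR in \<open>auto simp: mult.commute\<close>)
  finally show ?thesis unfolding T Tt_def .
qed

theorem theorem6p4:
  fixes n r :: nat
    and X Xp Delta U S V Ahat A :: "real mat"
  assumes X_dim: "X \<in> carrier_mat n r"
    and X_orth: "transpose_mat X * X = 1\<^sub>m r"
    and Xp_dim: "Xp \<in> carrier_mat n (n - r)"
    and XXp_orth: "orth_square (hcat X Xp)"
    and Delta_dim: "Delta \<in> carrier_mat n r"
    and Delta_tan: "transpose_mat X * Delta = 0\<^sub>m r r"
    and svd: "thin_svd Delta U S V"
    and Ahat_dim: "Ahat \<in> carrier_mat ((n - r) * r) ((n - r) * r)"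
    and A_dim: "A \<in> carrier_mat (n * r) (n * r)"
    and A_corr: "\<forall>D1 D2. D1 \<in> carrier_mat (n - r) r \<longrightarrow> D2 \<in> carrier_mat (n - r) r \<longrightarrow>
                   vecm D2 = Ahat *\<^sub>v vecm D1 \<longrightarrow> A *\<^sub>v vecm (Xp * D1) = vecm (Xp * D2)"
    and A_proj: "\<forall>w \<in> carrier_vec (n * r).
                   A *\<^sub>v w = A *\<^sub>v (kron (1\<^sub>m r) (Xp * transpose_mat Xp) *\<^sub>v w)"
  shows "A = kron (1\<^sub>m r) Xp * Ahat * kron (1\<^sub>m r) (transpose_mat Xp)
       \<and> Ahat = kron (1\<^sub>m r) (transpose_mat Xp) * A * kron (1\<^sub>m r) Xp
       \<and> (\<forall>t U2 S2 V2.
            thin_svd (- (transp X U S V t * Delta)) U2 S2 V2 \<longrightarrow>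
            (let T = transp X U S V t;
                 Xt = geod X U S V t;
                 Ttil = transp Xt U2 S2 V2 t;
                 Xpt = T * Xp;
                 At = kron (1\<^sub>m r) T * A * kron (1\<^sub>m r) Ttil
             in kron (1\<^sub>m r) (transpose_mat Xpt) * At * kron (1\<^sub>m r) Xpt = Ahat))"
proof -
  let ?m = "n - r"
  have XpXp: "transpose_mat Xp * Xp = 1\<^sub>m ?m" and XXp: "transpose_mat X * Xp = 0\<^sub>m r ?m"
    using hcat_facts[OF X_dim Xp_dim XXp_orth] by auto
  have Aeq: "A = kron (1\<^sub>m r) Xp * Ahat * kron (1\<^sub>m r) (transpose_mat Xp)"
    by (rule part1[OF Xp_dim Ahat_dim A_dim A_corr A_proj])
  have P2: "kron (1\<^sub>m r) (transpose_mat Xp) * A * kron (1\<^sub>m r) Xp = Ahat"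
    by (rule sandwich[OF Xp_dim Ahat_dim Aeq]) (use Xp_dim XpXp in auto)
  have P3: "\<forall>t U2 S2 V2.
            thin_svd (- (transp X U S V t * Delta)) U2 S2 V2 \<longrightarrow>
            (let T = transp X U S V t;
                 Xt = geod X U S V t;
                 Ttil = transp Xt U2 S2 V2 t;
                 Xpt = T * Xp;
                 At = kron (1\<^sub>m r) T * A * kron (1\<^sub>m r) Ttil
             in kron (1\<^sub>m r) (transpose_mat Xpt) * At * kron (1\<^sub>m r) Xpt = Ahat)"
    unfolding Let_def
    using part3[OF X_dim X_orth Xp_dim XpXp XXp Delta_dim Delta_tan svd Ahat_dim Aeq] by blast
  show ?thesis using Aeq P2 P3 by simp
qed

end
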